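(* Let $m>0$ and $n\ge 0$ be integers. Then the diameter of ${\rm SR}(m,n)$ is $\min(m-1,n)$.
   Context: ${\rm SR}(m,n)$ is the graph whose vertices are the vectors in $\{0,1,2,\dots\}^m$ with coordinate sum $n$, two vertices being adjacent when they differ in precisely two coordinate positions. *)

theory Defs
  imports Main "HOL-Library.Extended_Nat"
begin

definition SR_verts :: "nat \<Rightarrow> nat \<Rightarrow> nat list set" where
  "SR_verts m n = {x. length x = m \<and> sum_list x = n}"

definition SR_adj :: "nat \<Rightarrow> nat \<Rightarrow> nat list \<Rightarrow> nat list \<Rightarrow> bool" where
  "SR_adj m n x y \<longleftrightarrow> x \<in> SR_verts m n \<and> y \<in> SR_verts m n \<and>
     card {i. i < m \<and> x ! i \<noteq> y ! i} = 2"

text \<open>Graph distance (infinity if no path): least k with a walk of length k.\<close>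
definition SR_dist :: "nat \<Rightarrow> nat \<Rightarrow> nat list \<Rightarrow> nat list \<Rightarrow> enat" where
  "SR_dist m n x y = (INF k \<in> {k. (SR_adj m n ^^ k) x y}. enat k)"

definition SR_diameter :: "nat \<Rightarrow> nat \<Rightarrow> enat" where
  "SR_diameter m n = (SUP p \<in> SR_verts m n \<times> SR_verts m n. SR_dist m n (fst p) (snd p))"

end

theory Submission
  imports Defs
begin

lemma sum_nth: "x \<in> SR_verts m n \<Longrightarrow> (\<Sum>i<m. x!i) = n"
  unfolding SR_verts_def by (auto simp: sum_list_sum_nth atLeast0LessThan)

definition pot :: "nat \<Rightarrow> nat list \<Rightarrow> nat" where
  "pot m z = card {i. 1 \<le> i \<and> i < m \<and> z!i \<noteq> 0}"

lemma pot_step: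
  assumes "SR_adj m n z w"
  shows "pot m w \<le> pot m z + 1"
proof -
  let ?C = "{i. i < m \<and> z ! i \<noteq> w ! i}"
  let ?Nw = "{i. 1 \<le> i \<and> i < m \<and> w!i \<noteq> 0}"
  let ?Nz = "{i. 1 \<le> i \<and> i < m \<and> z!i \<noteq> 0}"
  have C2: "card ?C = 2" and zv: "z \<in> SR_verts m n" and wv: "w \<in> SR_verts m n"
    using assms unfolding SR_adj_def by auto
  have fC: "finite ?C" by auto
  have sub: "?Nw - ?Nz \<subseteq> ?C" by auto
  have "card (?Nw - ?Nz) \<le> 1"
  proof (rule ccontr)
    assume "\<not> card (?Nw - ?Nz) \<le> 1"
    hence "card (?Nw - ?Nz) \<ge> card ?C" using C2 by simp
    hence eq: "?Nw - ?Nz = ?C" using card_seteq[OF fC sub] by simp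
    have "(\<Sum>i<m. z!i) < (\<Sum>i<m. w!i)"
    proof (rule sum_strict_mono_ex1)
      show "\<forall>i\<in>{..<m}. z ! i \<le> w ! i"
      proof
        fix i assume "i \<in> {..<m}"
        show "z ! i \<le> w ! i"
        proof (cases "i \<in> ?C")
          case True then have "i \<in> ?Nw - ?Nz" using eq by simp
          then show ?thesis by auto
        qed (use \<open>i \<in> {..<m}\<close> in auto)
      qed
      obtain a where "a \<in> ?C" using C2 by (metis card.empty ex_in_conv zero_neq_numeral)
      then have "a \<in> ?Nw - ?Nz" using eq by simp
      then show "\<exists>i\<in>{..<m}. z ! i < w ! i" by force
    qed auto
    then show False using sum_nth[OF zv] sum_nth[OF wv] by simp
  qed
  have "?Nw \<subseteq> ?Nz \<union> (?Nw - ?Nz)" by auto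
  hence "card ?Nw \<le> card (?Nz \<union> (?Nw - ?Nz))" by (intro card_mono) auto
  also have "\<dots> \<le> card ?Nz + card (?Nw - ?Nz)" by (rule card_Un_le)
  finally show ?thesis unfolding pot_def using \<open>card (?Nw - ?Nz) \<le> 1\<close> by simp
qed

lemma pot_path: "(SR_adj m n ^^ k) z w \<Longrightarrow> pot m w \<le> pot m z + k"
proof (induction k arbitrary: w)
  case 0 then show ?case by simp
next
  case (Suc k)
  from Suc.prems obtain u where "(SR_adj m n ^^ k) z u" "SR_adj m n u w" by (rule relpowp_Suc_E)
  then show ?case using Suc.IH pot_step by fastforce
qed

lemma upper:
  assumes xv: "x \<in> SR_verts m n" and yv: "y \<in> SR_verts m n" and ne: "x \<noteq> y"
  shows "\<exists>k. (SR_adj m n ^^ k) x y \<and> 1 \<le> k \<and> k + 1 \<le> card {i. i < m \<and> x!i \<noteq> y!i}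
            \<and> k \<le> (\<Sum>i<m. x!i - y!i)"
  using xv ne
proof (induction "card {i. i < m \<and> x!i \<noteq> y!i}" arbitrary: x rule: less_induct)
  case less
  note xv = less.prems(1)
  have lx: "length x = m" and ly: "length y = m" using xv yv unfolding SR_verts_def by auto
  have sx: "(\<Sum>i<m. x!i) = n" and sy: "(\<Sum>i<m. y!i) = n" using sum_nth xv yv by auto
  obtain d where d: "d < m" "x!d \<noteq> y!d" using less.prems(2) lx ly nth_equalityI by metis
  obtain j where j: "j < m" "x!j > y!j"
  proof (rule ccontr)
    assume "\<not> thesis"
    hence le: "\<forall>k\<in>{..<m}. x!k \<le> y!k" using that by (meson lessThan_iff not_le_imp_less)
    have "(\<Sum>i<m. x!i) < (\<Sum>i<m. y!i)"
      by (rule sum_strict_mono_ex1) (use le d in \<open>auto intro!: bexI[of _ d] simp: order.strict_iff_order\<close>)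
    thus False using sx sy by simp
  qed
  obtain i where i: "i < m" "x!i < y!i"
  proof (rule ccontr)
    assume "\<not> thesis"
    hence le: "\<forall>k\<in>{..<m}. y!k \<le> x!k" using that by (meson lessThan_iff not_le_imp_less)
    have "(\<Sum>i<m. y!i) < (\<Sum>i<m. x!i)"
      by (rule sum_strict_mono_ex1) (use le d in \<open>auto intro!: bexI[of _ d] simp: order.strict_iff_order\<close>)
    thus False using sx sy by simp
  qed
  have ij: "i \<noteq> j" using i j by auto
  define t where "t = min (x!j - y!j) (y!i - x!i)"
  have t0: "t > 0" using i j unfolding t_def by auto
  have tj: "t \<le> x!j - y!j" and ti: "t \<le> y!i - x!i" unfolding t_def by auto
  define x' where "x' = x[j := x!j - t, i := x!i + t]"
  have lx': "length x' = m" using lx unfolding x'_def by simp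
  have nth': "\<And>k. k < m \<Longrightarrow> x'!k = (if k = i then x!i + t else if k = j then x!j - t else x!k)"
    unfolding x'_def using lx ij by (auto simp: nth_list_update)
  have "sum_list x' = sum_list x"
  proof -
    have e1: "sum_list (x[j := x!j - t]) = sum_list x - t"
      using sum_list_update[of j x "x!j - t"] j lx tj elem_le_sum_list[of j x] by simp
    have "x[j := x!j - t] ! i = x!i" using ij by simp
    then have "sum_list x' = sum_list (x[j := x!j - t]) + (x!i + t) - x!i"
      unfolding x'_def using sum_list_update[of i "x[j := x!j - t]" "x!i + t"] i lx by simp
    also have "\<dots> = sum_list x" using e1 j lx tj elem_le_sum_list[of j x] by simp
    finally show ?thesis .
  qed
  hence x'v: "x' \<in> SR_verts m n" using xv lx' unfolding SR_verts_def by simp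
  have Cxx': "{k. k < m \<and> x!k \<noteq> x'!k} = {i, j}"
  proof (intro set_eqI iffI)
    fix k assume "k \<in> {k. k < m \<and> x!k \<noteq> x'!k}"
    then show "k \<in> {i, j}" using nth'[of k] by (auto split: if_splits)
  next
    fix k assume "k \<in> {i, j}"
    then show "k \<in> {k. k < m \<and> x!k \<noteq> x'!k}"
      using nth'[of i] nth'[of j] i j t0 tj ij by auto
  qed
  have adj: "SR_adj m n x x'" unfolding SR_adj_def using xv x'v Cxx' ij by simp
  let ?D = "\<lambda>z. {k. k < m \<and> z!k \<noteq> y!k}"
  let ?E = "\<lambda>z. (\<Sum>k<m. z!k - y!k)"
  have Dsub: "?D x' \<subseteq> ?D x"
  proof
    fix k assume "k \<in> ?D x'"
    then show "k \<in> ?D x" using nth'[of k] i j ti tj by (auto split: if_splits)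
  qed
  have Dne: "?D x' \<noteq> ?D x"
  proof
    assume eq: "?D x' = ?D x"
    have "i \<in> ?D x" "j \<in> ?D x" using i j by auto
    hence "x'!i \<noteq> y!i" "x'!j \<noteq> y!j" using eq by blast+
    thus False using nth'[of i] nth'[of j] i j ij t_def tj ti by (auto simp: min_def split: if_splits)
  qed
  have Dlt: "card (?D x') < card (?D x)"
    using Dsub Dne by (intro psubset_card_mono) auto
  have Elt: "?E x' < ?E x"
  proof (rule sum_strict_mono_ex1)
    show "\<forall>k\<in>{..<m}. x'!k - y!k \<le> x!k - y!k"
    proof
      fix k assume "k \<in> {..<m}"
      then show "x'!k - y!k \<le> x!k - y!k" using nth'[of k] i ti by auto
    qed
    show "\<exists>k\<in>{..<m}. x'!k - y!k < x!k - y!k" using nth'[of j] j ij t0 tj by (intro bexI[of _ j]) auto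
  qed auto
  have D2: "2 \<le> card (?D x)"
  proof -
    have "{i, j} \<subseteq> ?D x" using i j by auto
    hence "card {i,j} \<le> card (?D x)" by (intro card_mono) auto
    thus ?thesis using ij by simp
  qed
  show ?case
  proof (cases "x' = y")
    case True
    have "(SR_adj m n ^^ 1) x y" using adj True by (simp add: relcompp_apply)
    moreover have "1 \<le> ?E x" using Elt by simp
    ultimately show ?thesis using D2 by (intro exI[of _ 1]) auto
  next
    case False
    from less.hyps[OF Dlt x'v False] obtain k where
      k: "(SR_adj m n ^^ k) x' y" "1 \<le> k" "k + 1 \<le> card (?D x')" "k \<le> ?E x'" by blast
    have "(SR_adj m n ^^ Suc k) x y" using relpowp_Suc_I2[OF adj k(1)] .
    thus ?thesis using k Dlt Elt by (intro exI[of _ "Suc k"]) auto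
  qed
qed


lemma path0: "(SR_adj m n ^^ 0) x x" by simp

lemma dist_le:
  assumes xv: "x \<in> SR_verts m n" and yv: "y \<in> SR_verts m n"
  shows "SR_dist m n x y \<le> enat (min (m - 1) n)"
proof -
  have "\<exists>k. (SR_adj m n ^^ k) x y \<and> k \<le> min (m - 1) n"
  proof (cases "x = y")
    case True then show ?thesis by (intro exI[of _ 0]) simp
  next
    case False
    from upper[OF xv yv False] obtain k where k: "(SR_adj m n ^^ k) x y"
      "k + 1 \<le> card {i. i < m \<and> x!i \<noteq> y!i}" "k \<le> (\<Sum>i<m. x!i - y!i)" by blast
    have "card {i. i < m \<and> x!i \<noteq> y!i} \<le> card {..<m}" by (intro card_mono) auto
    hence "k \<le> m - 1" using k(2) by simp
    moreover have "(\<Sum>i<m. x!i - y!i) \<le> (\<Sum>i<m. x!i)" by (intro sum_mono) auto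
    hence "k \<le> n" using k(3) sum_nth[OF xv] by simp
    ultimately show ?thesis using k(1) by auto
  qed
  then obtain k where k: "(SR_adj m n ^^ k) x y" "k \<le> min (m - 1) n" by blast
  have "SR_dist m n x y \<le> enat k" unfolding SR_dist_def by (rule INF_lower) (use k in simp)
  also have "\<dots> \<le> enat (min (m - 1) n)" using k(2) by simp
  finally show ?thesis .
qed

theorem proposition8:
  fixes m n :: nat
  assumes "m > 0"
  shows "SR_diameter m n = enat (min (m - 1) n)"
proof -
  define K where "K = min (m - 1) n"
  obtain m' where m': "m = Suc m'" using assms by (cases m) auto
  have Km: "K \<le> m'" "K \<le> n" unfolding K_def m' by auto
  define f0 where "f0 = (\<lambda>i::nat. if i = 0 then n else 0)"
  define f1 where "f1 = (\<lambda>i::nat. if i = 0 then n - K else if i \<le> K then 1 else 0)"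
  define x0 where "x0 = map f0 [0..<m]"
  define y0 where "y0 = map f1 [0..<m]"
  have s0: "(\<Sum>i<m. f0 i) = n" unfolding m' f0_def by (simp add: sum.lessThan_Suc_shift)
  have "(\<Sum>i<m'. (if i < K then 1 else 0::nat)) = K"
  proof -
    have "(\<Sum>i<m'. (if i < K then 1 else 0::nat)) = card ({..<m'} \<inter> {i. i < K})"
      by (simp add: sum.If_cases)
    also have "{..<m'} \<inter> {i. i < K} = {..<K}" using Km by auto
    finally show ?thesis by simp
  qed
  moreover have "(\<Sum>i<m. f1 i) = f1 0 + (\<Sum>i<m'. f1 (Suc i))"
    unfolding m' by (rule sum.lessThan_Suc_shift)
  moreover have "\<And>i. f1 (Suc i) = (if i < K then 1 else 0)" unfolding f1_def by auto
  ultimately have s1: "(\<Sum>i<m. f1 i) = n" using Km by (simp add: f1_def)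
  have x0v: "x0 \<in> SR_verts m n" unfolding SR_verts_def x0_def
    using s0 by (simp add: sum_list_sum_nth atLeast0LessThan)
  have y0v: "y0 \<in> SR_verts m n" unfolding SR_verts_def y0_def
    using s1 by (simp add: sum_list_sum_nth atLeast0LessThan)
  have px: "pot m x0 = 0" unfolding pot_def x0_def f0_def by simp
  have yn: "\<And>i. i < m \<Longrightarrow> y0!i = f1 i" unfolding y0_def by simp
  have "{i. 1 \<le> i \<and> i < m \<and> y0!i \<noteq> 0} = {1..K}"
  proof (intro set_eqI iffI)
    fix i assume "i \<in> {i. 1 \<le> i \<and> i < m \<and> y0!i \<noteq> 0}"
    then show "i \<in> {1..K}" using yn[of i] by (auto simp: f1_def split: if_splits)
  next
    fix i assume "i \<in> {1..K}"
    then show "i \<in> {i. 1 \<le> i \<and> i < m \<and> y0!i \<noteq> 0}" using yn[of i] Km m' by (auto simp: f1_def)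
  qed
  hence py: "pot m y0 = K" unfolding pot_def by simp
  have lo: "enat K \<le> SR_dist m n x0 y0" unfolding SR_dist_def
  proof (rule INF_greatest)
    fix k assume "k \<in> {k. (SR_adj m n ^^ k) x0 y0}"
    then have "pot m y0 \<le> pot m x0 + k" using pot_path by blast
    then show "enat K \<le> enat k" using px py by simp
  qed
  show ?thesis unfolding K_def[symmetric] SR_diameter_def
  proof (rule antisym)
    show "(SUP p\<in>SR_verts m n \<times> SR_verts m n. SR_dist m n (fst p) (snd p)) \<le> enat K"
      by (rule SUP_least) (use dist_le in \<open>auto simp: K_def\<close>)
    show "enat K \<le> (SUP p\<in>SR_verts m n \<times> SR_verts m n. SR_dist m n (fst p) (snd p))"
      by (rule SUP_upper2[of "(x0, y0)"]) (use x0v y0v lo in auto)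
  qed
qed

end
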